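(* Let $A_1,A_2\in\mathbf{C}^{n\times n}$, $B_1,B_2\in\mathbf{C}^{n\times m}$, and consider the system equation $$x^+=A_1x+A_2^{\#}x^{\#}+B_1u+B_2^{\#}u^{\#},\qquad x(0)=x_0,$$ where $x^+(t)=\dot x(t)$ for $t\in\mathbf{R}^+=[0,\infty)$ (continuous time) and $x^+(t)=x(t+1)$ for $t\in\mathbf{Z}^+=\{0,1,2,\dots\}$ (discrete time). For any $x_0\in\mathbf{C}^n$ and any input $u(t)\in\mathbf{C}^m$ (locally integrable in the continuous-time case), this equation has the unique solution $$x(t)=\mathrm{e}^{t\{A_1,A_2\}}x_0+\int_0^t\mathrm{e}^{(t-s)\{A_1,A_2\}}\{B_1,B_2\}u(s)\,\mathrm{d}s,\quad t\in\mathbf{R}^+,$$ $$x(t)=\{A_1,A_2\}^tx_0+\sum_{i=0}^{t-1}\{A_1,A_2\}^{t-1-i}\{B_1,B_2\}u(i),\quad 1\le t\in\mathbf{Z}^+,$$ and equivalently $$x(t)=\{\Phi_1(t),\Phi_2(t)\}x_0+\int_0^t\{\Phi_1(t-s),\Phi_2(t-s)\}\{B_1,B_2\}u(s)\,\mathrm{d}s,\quad t\in\mathbf{R}^+,$$ $$x(t)=\{\Phi_1(t),\Phi_2(t)\}x_0+\sum_{i=0}^{t-1}\{\Phi_1(t-1-i),\Phi_2(t-1-i)\}\{B_1,B_2\}u(i),\quad 1\le t\in\mathbf{Z}^+,$$ where $\begin{bmatrix}\Phi_1(t)\\ \Phi_2(t)\end{bmatrix}=\mathrm{e}^{t\{A_1,A_2\}_\diamond}\begin{bmatrix}I_n\\0\end{bmatrix}$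 for $t\in\mathbf{R}^+$ and $=\left(\{A_1,A_2\}_\diamond\right)^t\begin{bmatrix}I_n\\0\end{bmatrix}$ for $t\in\mathbf{Z}^+$.
   Context: $P^{\#}$ denotes entrywise conjugate. For matrices $A_1,A_2$ of equal size, the bimatrix $\{A_1,A_2\}$ is the real-linear map $x\mapsto A_1x+A_2^{\#}x^{\#}$; products of bimatrices are compositions. Powers: $\{A_1,A_2\}^0=\{I_n,0\}$ (identity), $\{A_1,A_2\}^i=\{A_1,A_2\}\{A_1,A_2\}^{i-1}$. Exponent: $\mathrm{e}^{t\{A_1,A_2\}}=\sum_{i=0}^\infty\frac{t^i}{i!}\{A_1,A_2\}^i$ (applied pointwise to vectors). Complex lifting: $\{A_1,A_2\}_\diamond=\begin{bmatrix}A_1 & A_2^{\#}\\ A_2 & A_1^{\#}\end{bmatrix}$. *)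

theory Defs
  imports "HOL-Analysis.Analysis"
begin

definition vconj :: "complex ^ 'n \<Rightarrow> complex ^ 'n" where
  "vconj x = (\<chi> i. cnj (x $ i))"

definition mconj :: "complex ^ 'm ^ 'n \<Rightarrow> complex ^ 'm ^ 'n" where
  "mconj A = (\<chi> i j. cnj (A $ i $ j))"

text \<open>The bimatrix {A1,A2} as the real-linear map x |-> A1 x + A2^# x^#.\<close>
definition bimat :: "complex ^ 'm ^ 'n \<Rightarrow> complex ^ 'm ^ 'n \<Rightarrow> complex ^ 'm \<Rightarrow> complex ^ 'n" where
  "bimat A1 A2 x = A1 *v x + mconj A2 *v vconj x"

definition bipow :: "complex ^ 'n ^ 'n \<Rightarrow> complex ^ 'n ^ 'n \<Rightarrow> nat \<Rightarrow> complex ^ 'n \<Rightarrow> complex ^ 'n" where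
  "bipow A1 A2 i = (bimat A1 A2 ^^ i)"

definition biexp :: "real \<Rightarrow> complex ^ 'n ^ 'n \<Rightarrow> complex ^ 'n ^ 'n \<Rightarrow> complex ^ 'n \<Rightarrow> complex ^ 'n" where
  "biexp t A1 A2 x = (\<Sum>i. (t ^ i / fact i) *\<^sub>R bipow A1 A2 i x)"

text \<open>Complex lifting {A1,A2}_diamond, a 2n x 2n matrix indexed by 'n + 'n
  (Inl = first block, Inr = second block).\<close>
definition lift :: "complex ^ 'n ^ 'n \<Rightarrow> complex ^ 'n ^ 'n \<Rightarrow> complex ^ ('n + 'n) ^ ('n + 'n)" where
  "lift A1 A2 = (\<chi> r c. case r of
       Inl i \<Rightarrow> (case c of Inl j \<Rightarrow> A1 $ i $ j | Inr j \<Rightarrow> cnj (A2 $ i $ j))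
     | Inr i \<Rightarrow> (case c of Inl j \<Rightarrow> A2 $ i $ j | Inr j \<Rightarrow> cnj (A1 $ i $ j)))"

definition matpow :: "'a::comm_ring_1 ^ 'k ^ 'k \<Rightarrow> nat \<Rightarrow> 'a ^ 'k ^ 'k" where
  "matpow M i = (((**) M) ^^ i) (mat 1)"

definition matexp :: "real \<Rightarrow> complex ^ 'k ^ 'k \<Rightarrow> complex ^ 'k ^ 'k" where
  "matexp t M = (\<Sum>i. (t ^ i / fact i) *\<^sub>R matpow M i)"

text \<open>[Phi1;Phi2] = N [I;0] : Phi1 is the (Inl,Inl) block, Phi2 the (Inr,Inl) block.\<close>
definition blk1 :: "complex ^ ('n + 'n) ^ ('n + 'n) \<Rightarrow> complex ^ 'n ^ 'n" where
  "blk1 N = (\<chi> i j. N $ Inl i $ Inl j)"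

definition blk2 :: "complex ^ ('n + 'n) ^ ('n + 'n) \<Rightarrow> complex ^ 'n ^ 'n" where
  "blk2 N = (\<chi> i j. N $ Inr i $ Inl j)"

definition PhiC1 :: "complex ^ 'n ^ 'n \<Rightarrow> complex ^ 'n ^ 'n \<Rightarrow> real \<Rightarrow> complex ^ 'n ^ 'n" where
  "PhiC1 A1 A2 t = blk1 (matexp t (lift A1 A2))"
definition PhiC2 :: "complex ^ 'n ^ 'n \<Rightarrow> complex ^ 'n ^ 'n \<Rightarrow> real \<Rightarrow> complex ^ 'n ^ 'n" where
  "PhiC2 A1 A2 t = blk2 (matexp t (lift A1 A2))"
definition PhiD1 :: "complex ^ 'n ^ 'n \<Rightarrow> complex ^ 'n ^ 'n \<Rightarrow> nat \<Rightarrow> complex ^ 'n ^ 'n" where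
  "PhiD1 A1 A2 t = blk1 (matpow (lift A1 A2) t)"
definition PhiD2 :: "complex ^ 'n ^ 'n \<Rightarrow> complex ^ 'n ^ 'n \<Rightarrow> nat \<Rightarrow> complex ^ 'n ^ 'n" where
  "PhiD2 A1 A2 t = blk2 (matpow (lift A1 A2) t)"

text \<open>Continuous-time solution (Caratheodory sense, integral form) on [0,inf).\<close>
definition csol :: "complex ^ 'n ^ 'n \<Rightarrow> complex ^ 'n ^ 'n \<Rightarrow> complex ^ 'm ^ 'n \<Rightarrow> complex ^ 'm ^ 'n
    \<Rightarrow> complex ^ 'n \<Rightarrow> (real \<Rightarrow> complex ^ 'm) \<Rightarrow> (real \<Rightarrow> complex ^ 'n) \<Rightarrow> bool" where
  "csol A1 A2 B1 B2 x0 u x \<longleftrightarrow>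
     (\<forall>t\<ge>0. ((\<lambda>s. bimat A1 A2 (x s) + bimat B1 B2 (u s)) has_integral (x t - x0)) {0..t})"

definition dsol :: "complex ^ 'n ^ 'n \<Rightarrow> complex ^ 'n ^ 'n \<Rightarrow> complex ^ 'm ^ 'n \<Rightarrow> complex ^ 'm ^ 'n
    \<Rightarrow> complex ^ 'n \<Rightarrow> (nat \<Rightarrow> complex ^ 'm) \<Rightarrow> (nat \<Rightarrow> complex ^ 'n) \<Rightarrow> bool" where
  "dsol A1 A2 B1 B2 x0 u x \<longleftrightarrow>
     x 0 = x0 \<and> (\<forall>t. x (Suc t) = bimat A1 A2 (x t) + bimat B1 B2 (u t))"

end

theory Submission
  imports Defs
begin


definition expo :: "('a::euclidean_space \<Rightarrow> 'a) \<Rightarrow> real \<Rightarrow> 'a \<Rightarrow> 'a" where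
  "expo F t w = (\<Sum>i. (t ^ i / fact i) *\<^sub>R (F ^^ i) w)"

lemma funpow_bl:
  fixes F :: "'a::real_normed_vector \<Rightarrow> 'a"
  shows "bounded_linear F \<Longrightarrow> bounded_linear (F ^^ i)"
proof (induction i)
  case 0 then show ?case by (simp add: id_def)
next
  case (Suc i)
  have "bounded_linear (\<lambda>x. F ((F ^^ i) x))"
    using bounded_linear_compose[OF Suc.prems Suc.IH[OF Suc.prems]] .
  then show ?case by (simp add: comp_def)
qed

lemma funpow_norm:
  fixes F :: "'a::real_normed_vector \<Rightarrow> 'a"
  assumes "bounded_linear F" "\<And>x. norm (F x) \<le> K * norm x" "0 \<le> K"
  shows "norm ((F ^^ i) w) \<le> K ^ i * norm w"
proof (induction i)
  case (Suc i)
  have "norm ((F ^^ Suc i) w) \<le> K * norm ((F ^^ i) w)" using assms(2)[of "(F ^^ i) w"] by simp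
  also have "\<dots> \<le> K * (K ^ i * norm w)" using Suc assms(3) by (intro mult_left_mono) auto
  finally show ?case by simp
qed simp

lemma expo_summable_norm:
  fixes F :: "'a::euclidean_space \<Rightarrow> 'a"
  assumes "bounded_linear F" "\<And>x. norm (F x) \<le> K * norm x" "0 \<le> K"
  shows "summable (\<lambda>i. norm ((t ^ i / fact i) *\<^sub>R (F ^^ i) w))"
proof (rule summable_comparison_test[where g = "\<lambda>i. norm w * ((\<bar>t\<bar> * K) ^ i / fact i)"])
  show "\<exists>N. \<forall>n\<ge>N. norm (norm ((t ^ n / fact n) *\<^sub>R (F ^^ n) w)) \<le> norm w * ((\<bar>t\<bar> * K) ^ n / fact n)"
  proof (intro exI allI impI)
    fix n
    have "norm (norm ((t ^ n / fact n) *\<^sub>R (F ^^ n) w)) = (\<bar>t\<bar> ^ n / fact n) * norm ((F ^^ n) w)"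
      by (simp add: power_abs)
    also have "\<dots> \<le> (\<bar>t\<bar> ^ n / fact n) * (K ^ n * norm w)"
      by (intro mult_left_mono funpow_norm[OF assms]) auto
    also have "\<dots> = norm w * ((\<bar>t\<bar> * K) ^ n / fact n)" by (simp add: power_mult_distrib)
    finally show "norm (norm ((t ^ n / fact n) *\<^sub>R (F ^^ n) w)) \<le> norm w * ((\<bar>t\<bar> * K) ^ n / fact n)" .
  qed
  show "summable (\<lambda>i. norm w * ((\<bar>t\<bar> * K) ^ i / fact i))"
    using summable_exp[of "\<bar>t\<bar> * K"] by (intro summable_mult) (simp add: field_simps)
qed

lemma expo_summable:
  fixes F :: "'a::euclidean_space \<Rightarrow> 'a"
  assumes "bounded_linear F"
  shows "summable (\<lambda>i. (t ^ i / fact i) *\<^sub>R (F ^^ i) w)"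
proof -
  obtain K where K: "\<And>x. norm (F x) \<le> norm x * K" "K > 0"
    using bounded_linear.pos_bounded[OF assms] by blast
  show ?thesis
    by (rule summable_norm_cancel, rule expo_summable_norm[OF assms, of K]) (use K in \<open>auto simp: mult.commute\<close>)
qed

lemma expo_norm:
  fixes F :: "'a::euclidean_space \<Rightarrow> 'a"
  assumes "bounded_linear F" "\<And>x. norm (F x) \<le> K * norm x" "0 \<le> K"
  shows "norm (expo F t w) \<le> exp (\<bar>t\<bar> * K) * norm w"
proof -
  have "norm (expo F t w) \<le> (\<Sum>i. norm ((t ^ i / fact i) *\<^sub>R (F ^^ i) w))"
    unfolding expo_def by (rule summable_norm[OF expo_summable_norm[OF assms]])
  also have "\<dots> \<le> (\<Sum>i. norm w * ((\<bar>t\<bar> * K) ^ i / fact i))"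
  proof (rule suminf_le)
    fix n
    have "norm ((t ^ n / fact n) *\<^sub>R (F ^^ n) w) = (\<bar>t\<bar> ^ n / fact n) * norm ((F ^^ n) w)"
      by (simp add: power_abs)
    also have "\<dots> \<le> (\<bar>t\<bar> ^ n / fact n) * (K ^ n * norm w)"
      by (intro mult_left_mono funpow_norm[OF assms]) auto
    also have "\<dots> = norm w * ((\<bar>t\<bar> * K) ^ n / fact n)" by (simp add: power_mult_distrib)
    finally show "norm ((t ^ n / fact n) *\<^sub>R (F ^^ n) w) \<le> norm w * ((\<bar>t\<bar> * K) ^ n / fact n)" .
    show "summable (\<lambda>i. norm w * ((\<bar>t\<bar> * K) ^ i / fact i))"
      using summable_exp[of "\<bar>t\<bar> * K"] by (intro summable_mult) (simp add: field_simps)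
  qed (rule expo_summable_norm[OF assms])
  also have "\<dots> = norm w * exp (\<bar>t\<bar> * K)"
    by (subst suminf_mult) (use summable_exp[of "\<bar>t\<bar> * K"] in \<open>auto simp: exp_def field_simps\<close>)
  finally show ?thesis by (simp add: mult.commute)
qed

lemma expo_add: "bounded_linear (F::'a::euclidean_space \<Rightarrow> 'a) \<Longrightarrow> expo F t (v + w) = expo F t v + expo F t w"
  unfolding expo_def
  by (subst suminf_add[OF expo_summable expo_summable], assumption+)
     (simp add: funpow_bl linear_simps scaleR_add_right)

lemma expo_scale:
  fixes F :: "'a::euclidean_space \<Rightarrow> 'a"
  assumes "bounded_linear F" shows "expo F t (c *\<^sub>R v) = c *\<^sub>R expo F t v"
proof -
  have "c *\<^sub>R expo F t v = (\<Sum>i. c *\<^sub>R ((t ^ i / fact i) *\<^sub>R (F ^^ i) v))"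
    unfolding expo_def by (rule bounded_linear.suminf[OF bounded_linear_scaleR_right expo_summable[OF assms]])
  then show ?thesis
    by (simp add: expo_def linear_simps funpow_bl[OF assms] scaleR_left_commute mult.commute)
qed

lemma expo_bl:
  assumes "bounded_linear F" shows "bounded_linear (expo F t)"
proof -
  obtain K where K: "\<And>x. norm (F x) \<le> norm x * K" "K > 0"
    using bounded_linear.pos_bounded[OF assms] by blast
  show ?thesis
  proof (rule bounded_linear_intro[where K = "exp (\<bar>t\<bar> * K)"])
    show "norm (expo F t x) \<le> norm x * exp (\<bar>t\<bar> * K)" for x
      using expo_norm[OF assms, of K t x] K by (simp add: mult.commute)
  qed (auto simp: expo_add expo_scale assms)
qed

lemma expo_comm: "bounded_linear F \<Longrightarrow> F (expo F t w) = expo F t (F w)"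
  unfolding expo_def
  by (subst bounded_linear.suminf[where f = F], assumption, rule expo_summable, assumption)
     (simp add: linear_simps funpow_swap1)

lemma expo_zero: "expo F 0 w = w"
proof -
  have "(\<lambda>i. ((0::real) ^ i / fact i) *\<^sub>R (F ^^ i) w) sums w"
    using sums_finite[of "{0}" "\<lambda>i. ((0::real) ^ i / fact i) *\<^sub>R (F ^^ i) w"]
    by (auto simp: power_0_left)
  then show ?thesis unfolding expo_def by (simp add: sums_iff)
qed

lemma expo_deriv:
  fixes F :: "'a::euclidean_space \<Rightarrow> 'a"
  assumes F: "bounded_linear F"
  shows "((\<lambda>t. expo F t w) has_vector_derivative expo F t (F w)) (at t)"
proof -
  have d: "((\<lambda>t. expo F t w \<bullet> b) has_field_derivative (expo F t (F w) \<bullet> b)) (at t)" for b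
  proof -
    define c where "c n = ((F ^^ n) w \<bullet> b) / fact n" for n
    have inner: "expo F y v \<bullet> b = (\<Sum>i. ((F ^^ i) v \<bullet> b) / fact i * y ^ i)" for y v
      unfolding expo_def
      by (subst bounded_linear.suminf[OF bounded_linear_inner_left expo_summable[OF F]])
         (simp add: field_simps)
    have sm: "summable (\<lambda>n. c n * y ^ n)" for y
      using bounded_linear.summable[OF bounded_linear_inner_left expo_summable[OF F, of y w], of b]
      by (simp add: c_def field_simps)
    have "((\<lambda>y. \<Sum>n. c n * y ^ n) has_field_derivative (\<Sum>n. diffs c n * t ^ n)) (at t)"
      by (rule termdiffs_strong_converges_everywhere[OF sm])
    moreover have "(\<lambda>y. \<Sum>n. c n * y ^ n) = (\<lambda>y. expo F y w \<bullet> b)"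
      by (simp add: inner c_def)
    moreover have "diffs c n = ((F ^^ n) (F w) \<bullet> b) / fact n" for n
      by (simp add: diffs_def c_def funpow_Suc_right del: funpow.simps)
    ultimately show ?thesis by (simp add: inner)
  qed
  have "((\<lambda>t. \<Sum>b\<in>Basis. (expo F t w \<bullet> b) *\<^sub>R b) has_vector_derivative
          (\<Sum>b\<in>Basis. (expo F t (F w) \<bullet> b) *\<^sub>R b)) (at t)"
    by (intro has_vector_derivative_sum has_vector_derivative_scaleR[of _ _ _ _ "\<lambda>_. _" 0, simplified] d)
  then show ?thesis by (simp add: euclidean_representation)
qed



lemma sigma_finite_lebesgue: "sigma_finite_measure (lebesgue :: real measure)"
proof (unfold_locales, intro exI conjI)
  show "countable (range (\<lambda>n::nat. {- real n .. real n}))" by simp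
  show "range (\<lambda>n::nat. {- real n .. real n}) \<subseteq> sets lebesgue" by auto
  show "\<Union> (range (\<lambda>n::nat. {- real n .. real n})) = space lebesgue"
  proof -
    have "x \<in> (\<Union>n. {- real n .. real n})" for x :: real
    proof -
      obtain n :: nat where "\<bar>x\<bar> \<le> real n" using real_arch_simple by blast
      then show ?thesis by (intro UN_I[of n]) (auto simp: abs_le_iff)
    qed
    then show ?thesis by auto
  qed
  show "\<forall>a\<in>range (\<lambda>n::nat. {- real n .. real n}). emeasure lebesgue a \<noteq> \<infinity>"
    by auto
qed

interpretation lebP: pair_sigma_finite "lebesgue :: real measure" "lebesgue :: real measure"
  by (simp add: pair_sigma_finite_def sigma_finite_lebesgue)

lemma fst_meas: "(\<lambda>p. fst p :: real) \<in> borel_measurable (lebesgue \<Otimes>\<^sub>M (lebesgue :: real measure))"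
  by (rule measurable_compose[OF measurable_fst]) (simp add: measurable_completion)

lemma snd_meas: "(\<lambda>p. snd p :: real) \<in> borel_measurable ((lebesgue :: real measure) \<Otimes>\<^sub>M lebesgue)"
  by (rule measurable_compose[OF measurable_snd]) (simp add: measurable_completion)

lemma tri_sets: "{(s,r). 0 \<le> r \<and> r \<le> s \<and> s \<le> (T::real)} \<in> sets (lebesgue \<Otimes>\<^sub>M (lebesgue :: real measure))"
proof -
  have "{(s,r). 0 \<le> r \<and> r \<le> s \<and> s \<le> (T::real)} = {p \<in> space (lebesgue \<Otimes>\<^sub>M (lebesgue :: real measure)). 0 \<le> snd p \<and> snd p \<le> fst p \<and> fst p \<le> T}"
    by (auto simp: space_pair_measure)
  also have "\<dots> \<in> sets (lebesgue \<Otimes>\<^sub>M (lebesgue :: real measure))"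
    using fst_meas snd_meas by measurable
  finally show ?thesis .
qed

lemma tri_fubini:
  fixes k :: "real \<Rightarrow> real \<Rightarrow> 'b::euclidean_space" and g :: "real \<Rightarrow> 'c::euclidean_space"
  assumes g: "g absolutely_integrable_on {0..T}"
    and meas: "(\<lambda>p. indicator {0..T} (snd p) *\<^sub>R k (fst p) (snd p)) \<in> borel_measurable (lebesgue \<Otimes>\<^sub>M lebesgue)"
    and bound: "\<And>s r. 0 \<le> r \<Longrightarrow> r \<le> s \<Longrightarrow> s \<le> T \<Longrightarrow> norm (k s r) \<le> C * norm (g r)"
  shows "(\<lambda>s. integral {0..s} (k s)) integrable_on {0..T}"
    and "(\<lambda>r. integral {r..T} (\<lambda>s. k s r)) integrable_on {0..T}"
    and "integral {0..T} (\<lambda>s. integral {0..s} (k s)) = integral {0..T} (\<lambda>r. integral {r..T} (\<lambda>s. k s r))"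
proof -
  let ?M = "lebesgue :: real measure"
  define Tri where "Tri = {(s,r). 0 \<le> r \<and> r \<le> s \<and> s \<le> (T::real)}"
  define f where "f s r = indicator Tri (s,r) *\<^sub>R k s r" for s r
  have Tri: "Tri \<in> sets (?M \<Otimes>\<^sub>M ?M)" unfolding Tri_def by (rule tri_sets)
  have f_alt: "f s r = indicator Tri (s,r) *\<^sub>R (indicator {0..T} r *\<^sub>R k s r)" for s r
    by (auto simp: f_def Tri_def indicator_def)
  have fmeas: "(\<lambda>p. f (fst p) (snd p)) \<in> borel_measurable (?M \<Otimes>\<^sub>M ?M)"
  proof -
    have "(\<lambda>p. f (fst p) (snd p)) = (\<lambda>p. indicator Tri p *\<^sub>R (indicator {0..T} (snd p) *\<^sub>R k (fst p) (snd p)))"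
      by (auto simp: f_alt)
    then show ?thesis using borel_measurable_scaleR[OF borel_measurable_indicator[OF Tri] meas] by simp
  qed
  have fmeas': "case_prod f \<in> borel_measurable (?M \<Otimes>\<^sub>M ?M)"
    using fmeas by (simp add: case_prod_beta')
  have gI: "integrable ?M (\<lambda>r. indicator {0..T} r *\<^sub>R g r)"
    using g by (simp add: set_integrable_def)
  define c0 where "c0 = (\<integral>r. norm (indicator {0..T} r *\<^sub>R g r) \<partial>?M)"
  define G where "G p = indicator {0..T} (fst p) * (\<bar>C\<bar> * norm (indicator {0..T} (snd p) *\<^sub>R g (snd p)))" for p :: "real \<times> real"
  have gnI: "integrable ?M (\<lambda>r. \<bar>C\<bar> * norm (indicator {0..T} r *\<^sub>R g r))"
    by (intro integrable_mult_right integrable_norm gI)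
  have gnmeas: "(\<lambda>r. norm (indicator {0..T} r *\<^sub>R g r)) \<in> borel_measurable ?M"
    using borel_measurable_integrable[OF gI] by measurable
  have Gmeas: "G \<in> borel_measurable (?M \<Otimes>\<^sub>M ?M)"
    unfolding G_def
    by (intro borel_measurable_times borel_measurable_indicator' measurable_compose[OF measurable_snd gnmeas] borel_measurable_const)
       (use fst_meas in measurable)
  have GI: "integrable (?M \<Otimes>\<^sub>M ?M) G"
  proof (rule lebP.Fubini_integrable[OF Gmeas])
    have eq: "(\<lambda>s. \<integral>r. norm (G (s, r)) \<partial>?M) = (\<lambda>s. indicator {0..T} s * (\<bar>C\<bar> * c0))"
      by (rule ext) (simp add: G_def c0_def abs_mult)
    have "integrable ?M (\<lambda>s. indicator {0..T} s * (\<bar>C\<bar> * c0))"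
      by (intro integrable_mult_left integrable_real_indicator) (auto simp: emeasure_lborel_Icc_eq)
    then show "integrable ?M (\<lambda>s. \<integral>r. norm (G (s, r)) \<partial>?M)" by (simp only: eq)
    show "AE s in ?M. integrable ?M (\<lambda>r. G (s, r))"
      unfolding G_def fst_conv snd_conv by (intro AE_I2 integrable_mult_right gnI)
  qed
  have fI: "integrable (?M \<Otimes>\<^sub>M ?M) (case_prod f)"
  proof (rule Bochner_Integration.integrable_bound[OF GI fmeas'], rule AE_I2)
    fix p :: "real \<times> real"
    obtain s r where p: "p = (s,r)" by (cases p)
    show "norm (case_prod f p) \<le> norm (G p)"
    proof (cases "p \<in> Tri")
      case True
      then have "0 \<le> r" "r \<le> s" "s \<le> T" by (auto simp: p Tri_def)
      then have "norm (k s r) \<le> \<bar>C\<bar> * norm (g r)"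
        using bound[of r s] by (smt (verit) mult_right_mono norm_ge_zero)
      with True \<open>0 \<le> r\<close> \<open>r \<le> s\<close> \<open>s \<le> T\<close> show ?thesis
        by (simp add: p f_def G_def)
    qed (simp add: p f_def G_def)
  qed
  have sec_s: "(\<lambda>r. f s r) \<in> borel_measurable ?M" for s
    using measurable_Pair2[OF fmeas', of s] by simp
  have sec_r: "(\<lambda>s. f s r) \<in> borel_measurable ?M" for r
    using measurable_Pair1[OF fmeas', of r] by simp
  have inner_s: "(\<integral>r. f s r \<partial>?M) = indicator {0..T} s *\<^sub>R integral {0..s} (k s)" for s
  proof (cases "0 \<le> s \<and> s \<le> T")
    case True
    have fe: "f s r = indicator {0..s} r *\<^sub>R k s r" for r
      using True by (auto simp: f_def Tri_def indicator_def)
    have "integrable ?M (\<lambda>r. f s r)"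
    proof (rule Bochner_Integration.integrable_bound[OF gnI sec_s], rule AE_I2)
      fix r
      show "norm (f s r) \<le> norm (\<bar>C\<bar> * norm (indicator {0..T} r *\<^sub>R g r))"
      proof (cases "0 \<le> r \<and> r \<le> s")
        case True
        then have "norm (k s r) \<le> \<bar>C\<bar> * norm (g r)"
          using bound[of r s] \<open>0 \<le> s \<and> s \<le> T\<close> by (smt (verit) mult_right_mono norm_ge_zero)
        with True \<open>0 \<le> s \<and> s \<le> T\<close> show ?thesis by (simp add: fe)
      qed (simp add: fe)
    qed
    then have si: "set_integrable ?M {0..s} (k s)"
      by (simp add: set_integrable_def fe)
    have "(\<integral>r. f s r \<partial>?M) = (LINT r:{0..s}|?M. k s r)"
      by (simp add: set_lebesgue_integral_def fe)
    also have "\<dots> = integral {0..s} (k s)"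
      by (rule set_lebesgue_integral_eq_integral(2)[OF si])
    finally show ?thesis using True by simp
  next
    case False
    then have "f s r = 0" for r by (auto simp: f_def Tri_def)
    then show ?thesis using False by simp
  qed
  have inner_r: "(\<integral>s. f s r \<partial>?M) = indicator {0..T} r *\<^sub>R integral {r..T} (\<lambda>s. k s r)" for r
  proof (cases "0 \<le> r \<and> r \<le> T")
    case True
    have fe: "f s r = indicator {r..T} s *\<^sub>R k s r" for s
      using True by (auto simp: f_def Tri_def indicator_def)
    have hI: "integrable ?M (\<lambda>s. indicator {0..T} s * (\<bar>C\<bar> * norm (g r)))"
      by (intro integrable_mult_left integrable_real_indicator) (auto simp: emeasure_lborel_Icc_eq)
    have "integrable ?M (\<lambda>s. f s r)"
    proof (rule Bochner_Integration.integrable_bound[OF hI sec_r], rule AE_I2)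
      fix s
      show "norm (f s r) \<le> norm (indicator {0..T} s * (\<bar>C\<bar> * norm (g r)))"
      proof (cases "r \<le> s \<and> s \<le> T")
        case True
        then have "norm (k s r) \<le> \<bar>C\<bar> * norm (g r)"
          using bound[of r s] \<open>0 \<le> r \<and> r \<le> T\<close> by (smt (verit) mult_right_mono norm_ge_zero)
        with True \<open>0 \<le> r \<and> r \<le> T\<close> show ?thesis by (simp add: fe)
      qed (auto simp: fe)
    qed
    then have si: "set_integrable ?M {r..T} (\<lambda>s. k s r)"
      by (simp add: set_integrable_def fe)
    have "(\<integral>s. f s r \<partial>?M) = (LINT s:{r..T}|?M. k s r)"
      by (simp add: set_lebesgue_integral_def fe)
    also have "\<dots> = integral {r..T} (\<lambda>s. k s r)"
      by (rule set_lebesgue_integral_eq_integral(2)[OF si])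
    finally show ?thesis using True by simp
  next
    case False
    then have "f s r = 0" for s by (auto simp: f_def Tri_def)
    then show ?thesis using False by simp
  qed
  have I1: "set_integrable ?M {0..T} (\<lambda>s. integral {0..s} (k s))"
    using lebP.integrable_fst[OF fI] by (simp add: set_integrable_def inner_s)
  have I2: "set_integrable ?M {0..T} (\<lambda>r. integral {r..T} (\<lambda>s. k s r))"
    using lebP.integrable_snd[OF fI] by (simp add: set_integrable_def inner_r)
  show "(\<lambda>s. integral {0..s} (k s)) integrable_on {0..T}"
    by (rule set_lebesgue_integral_eq_integral(1)[OF I1])
  show "(\<lambda>r. integral {r..T} (\<lambda>s. k s r)) integrable_on {0..T}"
    by (rule set_lebesgue_integral_eq_integral(1)[OF I2])
  have "integral {0..T} (\<lambda>s. integral {0..s} (k s)) = (\<integral>s. (\<integral>r. f s r \<partial>?M) \<partial>?M)"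
    by (simp add: set_lebesgue_integral_eq_integral(2)[OF I1, symmetric] set_lebesgue_integral_def inner_s)
  also have "\<dots> = (\<integral>r. (\<integral>s. f s r \<partial>?M) \<partial>?M)"
    by (rule lebP.Fubini_integral[OF fI, symmetric])
  also have "\<dots> = integral {0..T} (\<lambda>r. integral {r..T} (\<lambda>s. k s r))"
    by (simp add: set_lebesgue_integral_eq_integral(2)[OF I2, symmetric] set_lebesgue_integral_def inner_r)
  finally show "integral {0..T} (\<lambda>s. integral {0..s} (k s)) = integral {0..T} (\<lambda>r. integral {r..T} (\<lambda>s. k s r))" .
qed



lemma expo_cont: "bounded_linear (F::'a::euclidean_space \<Rightarrow> 'a) \<Longrightarrow> continuous_on S (\<lambda>t. expo F t w)"
  by (intro continuous_at_imp_continuous_on ballI has_derivative_continuous)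
     (use expo_deriv in \<open>auto simp: has_vector_derivative_def\<close>)

lemma expo_chain:
  fixes F :: "'a::euclidean_space \<Rightarrow> 'a"
  assumes F: "bounded_linear F"
  shows "((\<lambda>s. expo F (s - r) w) has_vector_derivative expo F (s - r) (F w)) (at s within S)"
proof -
  have "(((\<lambda>t. expo F t w) \<circ> (\<lambda>s. s - r)) has_vector_derivative 1 *\<^sub>R expo F (s - r) (F w)) (at s within S)"
    by (intro vector_diff_chain_within has_vector_derivative_at_within[OF expo_deriv[OF F]])
       (auto intro!: derivative_eq_intros)
  then show ?thesis by (simp add: comp_def)
qed

lemma expo_basis:
  fixes F :: "'a::euclidean_space \<Rightarrow> 'a"
  assumes F: "bounded_linear F"
  shows "expo F t v = (\<Sum>b\<in>Basis. (v \<bullet> b) *\<^sub>R expo F t b)"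
proof -
  have "expo F t v = expo F t (\<Sum>b\<in>Basis. (v \<bullet> b) *\<^sub>R b)" by (simp add: euclidean_representation)
  also have "\<dots> = (\<Sum>b\<in>Basis. (v \<bullet> b) *\<^sub>R expo F t b)"
    using bounded_linear.linear[OF expo_bl[OF F, of t]]
    by (simp add: linear_sum linear_scale)
  finally show ?thesis .
qed

lemma expo_absint:
  fixes F :: "'a::euclidean_space \<Rightarrow> 'a"
  assumes F: "bounded_linear F" and g: "g absolutely_integrable_on {lo..hi}"
  shows "(\<lambda>s. expo F (t - s) (g s)) absolutely_integrable_on {lo..hi}"
proof -
  have bil: "bilinear (\<lambda>(x::'a) (y::real). y *\<^sub>R x)"
    by (simp add: bilinear_conv_bounded_bilinear bounded_bilinear.flip[OF bounded_bilinear_scaleR])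
  have "(\<lambda>s. (g s \<bullet> b) *\<^sub>R expo F (t - s) b) absolutely_integrable_on {lo..hi}" for b
  proof (rule absolutely_integrable_bounded_measurable_product[OF bil, of "\<lambda>s. expo F (t - s) b" _ "\<lambda>s. g s \<bullet> b", simplified])
    have c: "continuous_on {lo..hi} (\<lambda>s. expo F (t - s) b)"
      by (rule continuous_on_compose2[OF expo_cont[OF F, of UNIV]]) (auto intro!: continuous_intros)
    show "(\<lambda>s. expo F (t - s) b) \<in> borel_measurable (lebesgue_on {lo..hi})"
      by (rule continuous_imp_measurable_on_sets_lebesgue[OF c]) auto
    show "bounded ((\<lambda>s. expo F (t - s) b) ` {lo..hi})"
      by (rule compact_imp_bounded[OF compact_continuous_image[OF c]]) auto
    show "(\<lambda>s. g s \<bullet> b) absolutely_integrable_on {lo..hi}"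
      by (rule absolutely_integrable_component[OF g])
  qed auto
  then have "(\<lambda>s. \<Sum>b\<in>Basis. (g s \<bullet> b) *\<^sub>R expo F (t - s) b) absolutely_integrable_on {lo..hi}"
    by (intro absolutely_integrable_sum) auto
  then show ?thesis by (simp add: expo_basis[OF F, symmetric])
qed

lemma kern_meas:
  fixes F :: "'a::euclidean_space \<Rightarrow> 'a"
  assumes F: "bounded_linear F" and g: "g absolutely_integrable_on {0..T}"
  shows "(\<lambda>p. indicator {0..T} (snd p) *\<^sub>R F (expo F (fst p - snd p) (g (snd p))))
           \<in> borel_measurable (lebesgue \<Otimes>\<^sub>M (lebesgue :: real measure))"
proof -
  define gi where "gi r = indicator {0..T} r *\<^sub>R g r" for r
  have gim: "gi \<in> borel_measurable lebesgue"
    using g unfolding set_integrable_def gi_def by (rule borel_measurable_integrable)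
  have eq: "indicator {0..T} (snd p) *\<^sub>R F (expo F (fst p - snd p) (g (snd p)))
      = (\<Sum>b\<in>Basis. (gi (snd p) \<bullet> b) *\<^sub>R F (expo F (fst p - snd p) b))" for p
  proof -
    have "indicator {0..T} (snd p) *\<^sub>R F (expo F (fst p - snd p) (g (snd p)))
        = F (expo F (fst p - snd p) (gi (snd p)))"
      by (simp add: gi_def expo_scale[OF F] linear_simps(5)[OF F])
    also have "\<dots> = (\<Sum>b\<in>Basis. (gi (snd p) \<bullet> b) *\<^sub>R F (expo F (fst p - snd p) b))"
      by (subst expo_basis[OF F]) (simp add: linear_sum[OF bounded_linear.linear[OF F]] linear_simps(5)[OF F])
    finally show ?thesis .
  qed
  have phim: "(\<lambda>d. F (expo F d b)) \<in> borel_measurable borel" for b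
    by (rule borel_measurable_continuous_onI)
       (rule continuous_on_compose2[OF linear_continuous_on[OF F] expo_cont[OF F]], auto)
  have dm: "(\<lambda>p. fst p - snd p :: real) \<in> borel_measurable (lebesgue \<Otimes>\<^sub>M (lebesgue :: real measure))"
    using fst_meas snd_meas by (rule borel_measurable_diff)
  show ?thesis
    unfolding eq
    by (intro borel_measurable_sum borel_measurable_scaleR borel_measurable_inner
          measurable_compose[OF measurable_snd gim] measurable_compose[OF dm phim] borel_measurable_const)
qed

lemma X_csol:
  fixes F :: "'a::euclidean_space \<Rightarrow> 'a"
  assumes F: "bounded_linear F" and g: "\<And>t. t \<ge> 0 \<Longrightarrow> g absolutely_integrable_on {0..t}"
    and t: "0 \<le> t"
  shows "((\<lambda>s. F (expo F s x0 + integral {0..s} (\<lambda>r. expo F (s - r) (g r))) + g s) has_integral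
           (expo F t x0 + integral {0..t} (\<lambda>r. expo F (t - r) (g r)) - x0)) {0..t}"
proof -
  obtain K where K: "\<And>x. norm (F x) \<le> norm x * K" "K > 0"
    using bounded_linear.pos_bounded[OF F] by blast
  have K': "norm (F x) \<le> K * norm x" for x using K(1)[of x] by (simp add: mult.commute)
  have gint: "g integrable_on {0..t}"
    by (rule set_lebesgue_integral_eq_integral(1)[OF g[OF t]])
  have EI: "(\<lambda>r. expo F (s - r) (g r)) integrable_on {0..s}" if "0 \<le> s" for s
    by (rule set_lebesgue_integral_eq_integral(1)[OF expo_absint[OF F g[OF that]]])
  define k where "k s r = F (expo F (s - r) (g r))" for s r
  have eqF: "F (expo F s x0 + integral {0..s} (\<lambda>r. expo F (s - r) (g r))) + g s
      = expo F s (F x0) + integral {0..s} (k s) + g s" if "s \<in> {0..t}" for s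
  proof -
    have "F (integral {0..s} (\<lambda>r. expo F (s - r) (g r))) = integral {0..s} (k s)"
      using integral_linear[OF EI F, of s] that by (simp add: k_def[abs_def] comp_def)
    then show ?thesis by (simp add: linear_simps(1)[OF F] expo_comm[OF F])
  qed
  have bound: "norm (k s r) \<le> (K * exp (t * K)) * norm (g r)" if "0 \<le> r" "r \<le> s" "s \<le> t" for s r
  proof -
    have "norm (k s r) \<le> K * norm (expo F (s - r) (g r))" unfolding k_def by (rule K')
    also have "\<dots> \<le> K * (exp (\<bar>s - r\<bar> * K) * norm (g r))"
      using expo_norm[OF F K'] K(2) by (intro mult_left_mono) (auto simp: less_imp_le)
    also have "\<dots> \<le> K * (exp (t * K) * norm (g r))"
      using that K(2) by (intro mult_left_mono mult_right_mono) auto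
    finally show ?thesis by simp
  qed
  have meas: "(\<lambda>p. indicator {0..t} (snd p) *\<^sub>R k (fst p) (snd p)) \<in> borel_measurable (lebesgue \<Otimes>\<^sub>M lebesgue)"
    unfolding k_def by (rule kern_meas[OF F g[OF t]])
  have fub1: "(\<lambda>s. integral {0..s} (k s)) integrable_on {0..t}"
    by (rule tri_fubini(1)[OF g[OF t] meas], rule bound, assumption+)
  have fub3: "integral {0..t} (\<lambda>s. integral {0..s} (k s)) = integral {0..t} (\<lambda>r. integral {r..t} (\<lambda>s. k s r))"
    by (rule tri_fubini(3)[OF g[OF t] meas], rule bound, assumption+)
  have inner: "integral {r..t} (\<lambda>s. k s r) = expo F (t - r) (g r) - g r" if "r \<in> {0..t}" for r
  proof -
    have "((\<lambda>s. expo F (s - r) (F (g r))) has_integral (expo F (t - r) (g r) - expo F (r - r) (g r))) {r..t}"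
      using that by (intro fundamental_theorem_of_calculus expo_chain[OF F]) auto
    then have "((\<lambda>s. k s r) has_integral (expo F (t - r) (g r) - g r)) {r..t}"
      by (simp add: k_def expo_comm[OF F] expo_zero)
    then show ?thesis by (rule integral_unique)
  qed
  have h1: "((\<lambda>s. expo F s (F x0)) has_integral (expo F t x0 - x0)) {0..t}"
  proof -
    have "((\<lambda>s. expo F (s - 0) (F x0)) has_integral (expo F (t - 0) x0 - expo F (0 - 0) x0)) {0..t}"
      using t by (intro fundamental_theorem_of_calculus expo_chain[OF F]) auto
    then show ?thesis by (simp add: expo_zero)
  qed
  have "integral {0..t} (\<lambda>s. integral {0..s} (k s)) = integral {0..t} (\<lambda>r. integral {r..t} (\<lambda>s. k s r))"
    by (rule fub3)
  also have "\<dots> = integral {0..t} (\<lambda>r. expo F (t - r) (g r) - g r)"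
    by (rule integral_cong) (rule inner)
  also have "\<dots> = integral {0..t} (\<lambda>r. expo F (t - r) (g r)) - integral {0..t} g"
    by (rule integral_diff[OF EI[OF t] gint])
  finally have h2: "((\<lambda>s. integral {0..s} (k s)) has_integral
      (integral {0..t} (\<lambda>r. expo F (t - r) (g r)) - integral {0..t} g)) {0..t}"
    using integrable_integral[OF fub1] by simp
  have "((\<lambda>s. expo F s (F x0) + integral {0..s} (k s) + g s) has_integral
      (expo F t x0 - x0 + (integral {0..t} (\<lambda>r. expo F (t - r) (g r)) - integral {0..t} g) + integral {0..t} g)) {0..t}"
    by (intro has_integral_add h1 h2 integrable_integral gint)
  then have "((\<lambda>s. expo F s (F x0) + integral {0..s} (k s) + g s) has_integral
      (expo F t x0 + integral {0..t} (\<lambda>r. expo F (t - r) (g r)) - x0)) {0..t}"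
    by (simp add: algebra_simps)
  then show ?thesis
    by (rule has_integral_eq[rotated]) (simp add: eqF)
qed

lemma csol_unique:
  fixes F :: "'a::euclidean_space \<Rightarrow> 'a" and d :: "real \<Rightarrow> 'a"
  assumes F: "bounded_linear F" and H: "\<And>t. t \<ge> 0 \<Longrightarrow> ((\<lambda>s. F (d s)) has_integral d t) {0..t}"
    and T: "0 \<le> T"
  shows "d T = 0"
proof -
  obtain K where K: "\<And>x. norm (F x) \<le> norm x * K" "K > 0"
    using bounded_linear.pos_bounded[OF F] by blast
  have int: "(\<lambda>s. F (d s)) integrable_on {0..T}" using H[OF T] by blast
  have dI: "d t = integral {0..t} (\<lambda>s. F (d s))" if "t \<in> {0..T}" for t
    using H[of t] that by (simp add: integral_unique)
  have cont: "continuous_on {0..T} d"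
    by (rule continuous_on_eq[OF indefinite_integral_continuous_1[OF int]]) (simp add: dI)
  obtain M where M: "M > 0" "\<And>s. s \<in> {0..T} \<Longrightarrow> norm (d s) \<le> M"
    using compact_imp_bounded[OF compact_continuous_image[OF cont compact_Icc]]
    by (auto simp: bounded_pos)
  have claim: "\<forall>t\<in>{0..T}. norm (d t) \<le> M * (K * t) ^ n / fact n" for n
  proof (induction n)
    case 0
    then show ?case using M by simp
  next
    case (Suc n)
    show ?case
    proof
      fix t assume t: "t \<in> {0..T}"
      have sub: "{0..t} \<subseteq> {0..T}" using t by auto
      have bI: "((\<lambda>s. K * (M * (K * s) ^ n / fact n)) has_integral
                (M * (K * t) ^ Suc n / fact (Suc n) - M * (K * 0) ^ Suc n / fact (Suc n))) {0..t}"
      proof (rule fundamental_theorem_of_calculus)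
        show "0 \<le> t" using t by simp
        fix x assume "x \<in> {0..t}"
        have "((\<lambda>s. M * (K * s) ^ Suc n / fact (Suc n)) has_real_derivative
                 M * (real (Suc n) * (K * x) ^ n * K) / fact (Suc n)) (at x within {0..t})"
          by (auto intro!: derivative_eq_intros simp del: fact_Suc of_nat_Suc power_Suc)
        moreover have "M * (real (Suc n) * (K * x) ^ n * K) / fact (Suc n) = K * (M * (K * x) ^ n / fact n)"
          by (simp add: fact_Suc field_simps del: of_nat_Suc)
        ultimately have "((\<lambda>s. M * (K * s) ^ Suc n / fact (Suc n)) has_real_derivative
                 K * (M * (K * x) ^ n / fact n)) (at x within {0..t})"
          by (simp only:)
        then show "((\<lambda>s. M * (K * s) ^ Suc n / fact (Suc n)) has_vector_derivative
                 K * (M * (K * x) ^ n / fact n)) (at x within {0..t})"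
          by (rule has_real_derivative_iff_has_vector_derivative[THEN iffD1])
      qed
      have "norm (d t) = norm (integral {0..t} (\<lambda>s. F (d s)))" using t by (simp add: dI)
      also have "\<dots> \<le> integral {0..t} (\<lambda>s. K * (M * (K * s) ^ n / fact n))"
      proof (rule integral_norm_bound_integral)
        show "(\<lambda>s. F (d s)) integrable_on {0..t}" by (rule integrable_on_subinterval[OF int sub])
        show "(\<lambda>s. K * (M * (K * s) ^ n / fact n)) integrable_on {0..t}" using bI by blast
        fix s assume s: "s \<in> {0..t}"
        have "norm (F (d s)) \<le> norm (d s) * K" by (rule K(1))
        also have "\<dots> \<le> (M * (K * s) ^ n / fact n) * K"
          using Suc.IH s sub K(2) by (intro mult_right_mono) auto
        finally show "norm (F (d s)) \<le> K * (M * (K * s) ^ n / fact n)" by (simp add: mult.commute)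
      qed
      also have "\<dots> = M * (K * t) ^ Suc n / fact (Suc n)"
        using integral_unique[OF bI] by simp
      finally show "norm (d t) \<le> M * (K * t) ^ Suc n / fact (Suc n)" .
    qed
  qed
  have "(\<lambda>n. (K * T) ^ n / fact n) \<longlonglongrightarrow> 0"
    using summable_LIMSEQ_zero[OF summable_exp[of "K * T"]] by (simp add: field_simps)
  then have lim: "(\<lambda>n. M * ((K * T) ^ n / fact n)) \<longlonglongrightarrow> 0"
    using tendsto_mult_left[of _ 0 _ M] by (simp del: times_divide_eq_right)
  have "norm (d T) \<le> 0"
  proof (rule LIMSEQ_le_const[OF lim], intro exI allI impI)
    fix n :: nat
    show "norm (d T) \<le> M * ((K * T) ^ n / fact n)" using claim[of n] T by simp
  qed
  then show ?thesis by simp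
qed

lemma cont_main:
  fixes F :: "'a::euclidean_space \<Rightarrow> 'a" and g :: "real \<Rightarrow> 'a"
  assumes F: "bounded_linear F" and g: "\<And>t. t \<ge> 0 \<Longrightarrow> g absolutely_integrable_on {0..t}"
  shows "(\<exists>x. \<forall>t\<ge>0. ((\<lambda>s. F (x s) + g s) has_integral (x t - x0)) {0..t}) \<and>
    (\<forall>x. (\<forall>t\<ge>0. ((\<lambda>s. F (x s) + g s) has_integral (x t - x0)) {0..t}) \<longleftrightarrow>
         (\<forall>t\<ge>0. ((\<lambda>s. expo F (t - s) (g s)) has_integral (x t - expo F t x0)) {0..t}))"
proof -
  define X where "X t = expo F t x0 + integral {0..t} (\<lambda>s. expo F (t - s) (g s))" for t
  have cX: "((\<lambda>s. F (X s) + g s) has_integral (X t - x0)) {0..t}" if "t \<ge> 0" for t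
    unfolding X_def by (rule X_csol[OF F g that])
  have vX: "((\<lambda>s. expo F (t - s) (g s)) has_integral (X t - expo F t x0)) {0..t}" if "t \<ge> 0" for t
    using integrable_integral[OF set_lebesgue_integral_eq_integral(1)[OF expo_absint[OF F g[OF that]]]]
    by (simp add: X_def)
  have c2X: "x t = X t" if cx: "\<forall>t\<ge>0. ((\<lambda>s. F (x s) + g s) has_integral (x t - x0)) {0..t}" and t: "t \<ge> 0" for x t
  proof -
    have "(\<lambda>s. x s - X s) t = 0"
    proof (rule csol_unique[OF F _ t])
      fix t :: real assume t: "t \<ge> 0"
      have "((\<lambda>s. (F (x s) + g s) - (F (X s) + g s)) has_integral ((x t - x0) - (X t - x0))) {0..t}"
        using cx t cX[OF t] by (intro has_integral_diff) auto
      then show "((\<lambda>s. F (x s - X s)) has_integral (x t - X t)) {0..t}"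
        by (simp add: linear_simps(2)[OF F])
    qed
    then show ?thesis by simp
  qed
  have v2X: "x t = X t" if vx: "\<forall>t\<ge>0. ((\<lambda>s. expo F (t - s) (g s)) has_integral (x t - expo F t x0)) {0..t}" and t: "t \<ge> 0" for x t
    using has_integral_unique[OF vx[rule_format, OF t] vX[OF t]] by simp
  have X2c: "\<forall>t\<ge>0. ((\<lambda>s. F (x s) + g s) has_integral (x t - x0)) {0..t}"
    if eq: "\<forall>t\<ge>0. x t = X t" for x
  proof (intro allI impI)
    fix t :: real assume t: "t \<ge> 0"
    show "((\<lambda>s. F (x s) + g s) has_integral (x t - x0)) {0..t}"
      using has_integral_eq[OF _ cX[OF t], of "\<lambda>s. F (x s) + g s"] eq t by auto
  qed
  have X2v: "\<forall>t\<ge>0. ((\<lambda>s. expo F (t - s) (g s)) has_integral (x t - expo F t x0)) {0..t}"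
    if eq: "\<forall>t\<ge>0. x t = X t" for x
    using vX eq by auto
  show ?thesis
  proof (intro conjI allI)
    show "\<exists>x. \<forall>t\<ge>0. ((\<lambda>s. F (x s) + g s) has_integral (x t - x0)) {0..t}"
      using cX by blast
    fix x
    show "(\<forall>t\<ge>0. ((\<lambda>s. F (x s) + g s) has_integral (x t - x0)) {0..t}) \<longleftrightarrow>
         (\<forall>t\<ge>0. ((\<lambda>s. expo F (t - s) (g s)) has_integral (x t - expo F t x0)) {0..t})"
      using c2X[of x] v2X[of x] X2c[of x] X2v[of x] by blast
  qed
qed



lemma vconj_add: "vconj (x + y) = vconj x + vconj y"
  by (simp add: vconj_def vec_eq_iff)
lemma vconj_scaleR: "vconj (c *\<^sub>R x) = c *\<^sub>R vconj x"
  by (simp add: vconj_def vec_eq_iff complex_cnj_scaleR)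

lemma mv_scaleR: "(A :: complex^'m^'n) *v (c *\<^sub>R x) = c *\<^sub>R (A *v x)"
  by (simp add: vec_eq_iff matrix_vector_mult_def scaleR_sum_right)

lemma bimat_add: "bimat A1 A2 (x + y) = bimat A1 A2 x + bimat A1 A2 y"
  by (simp add: bimat_def vconj_add matrix_vector_right_distrib)
lemma bimat_scaleR: "bimat A1 A2 (c *\<^sub>R x) = c *\<^sub>R bimat A1 A2 x"
  by (simp add: bimat_def vconj_scaleR mv_scaleR scaleR_add_right)

lemma bimat_bl: "bounded_linear (bimat A1 A2)"
  by (simp add: linear_conv_bounded_linear[symmetric] linearI bimat_add bimat_scaleR)

lemma bimat_add_mat: "bimat (P1 + Q1) (P2 + Q2) x = bimat P1 P2 x + bimat Q1 Q2 x"
  by (simp add: bimat_def mconj_def vec_eq_iff matrix_vector_mult_def sum.distrib algebra_simps)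
lemma bimat_scaleR_mat: "bimat (c *\<^sub>R P1) (c *\<^sub>R P2) x = c *\<^sub>R bimat P1 P2 x"
  by (simp add: bimat_def mconj_def vec_eq_iff matrix_vector_mult_def scaleR_sum_right complex_cnj_scaleR scaleR_add_right)

definition W :: "complex^'n::finite \<Rightarrow> complex^('n + 'n)" where
  "W v = (\<chi> r. case r of Inl i \<Rightarrow> v $ i | Inr i \<Rightarrow> cnj (v $ i))"

definition struct :: "complex^('n::finite + 'n)^('n + 'n) \<Rightarrow> bool" where
  "struct M \<longleftrightarrow> (\<forall>a b. M $ Inl a $ Inr b = cnj (M $ Inr a $ Inl b) \<and> M $ Inr a $ Inr b = cnj (M $ Inl a $ Inl b))"

lemma sum_plus: "(\<Sum>c\<in>(UNIV :: ('n::finite + 'n) set). f c) = (\<Sum>j\<in>UNIV. f (Inl j)) + (\<Sum>j\<in>UNIV. f (Inr j))"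
  by (simp add: UNIV_Plus_UNIV[symmetric] sum.Plus del: UNIV_Plus_UNIV)

lemma struct_W:
  assumes "struct M"
  shows "M *v W v = W (bimat (blk1 M) (blk2 M) v)"
proof -
  have "(M *v W v) $ r = W (bimat (blk1 M) (blk2 M) v) $ r" for r
  proof (cases r)
    case (Inl a)
    then show ?thesis using assms
      by (simp add: matrix_vector_mult_def sum_plus W_def bimat_def blk1_def blk2_def mconj_def vconj_def struct_def)
  next
    case (Inr a)
    then show ?thesis using assms
      by (simp add: matrix_vector_mult_def sum_plus W_def bimat_def blk1_def blk2_def mconj_def vconj_def struct_def
          cnj_sum add.commute)
  qed
  then show ?thesis by (simp add: vec_eq_iff)
qed

lemma W_inj: "W v = W w \<Longrightarrow> v = w"
  by (auto simp: W_def vec_eq_iff dest: spec[of _ "Inl _"])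

lemma struct_lift: "struct (lift A1 A2)"
  by (simp add: struct_def lift_def)
lemma blk_lift: "blk1 (lift A1 A2) = A1" "blk2 (lift A1 A2) = A2"
  by (simp_all add: blk1_def blk2_def lift_def vec_eq_iff)

lemma struct_one: "struct (mat 1)"
  by (simp add: struct_def mat_def)
lemma bimat_one: "bimat (blk1 (mat 1)) (blk2 (mat 1)) v = v"
proof -
  have "blk1 (mat 1 :: complex^('n::finite + 'n)^('n + 'n)) = mat 1" "blk2 (mat 1 :: complex^('n + 'n)^('n + 'n)) = 0"
    by (simp_all add: blk1_def blk2_def mat_def vec_eq_iff)
  note eqs = this
  show ?thesis unfolding bimat_def eqs matrix_vector_mul_lid by (simp add: mconj_def matrix_vector_mult_def vec_eq_iff)
qed

lemma struct_mult: "struct M \<Longrightarrow> struct N \<Longrightarrow> struct (M ** N)"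
  by (simp add: struct_def matrix_matrix_mult_def sum_plus cnj_sum add.commute)

lemma matpow_Suc: "matpow M (Suc i) = M ** matpow M i"
  by (simp add: matpow_def)
lemma matpow_0: "matpow M 0 = mat 1"
  by (simp add: matpow_def)

lemma struct_matpow: "struct (matpow (lift A1 A2) i)"
  by (induction i) (simp_all add: matpow_0 matpow_Suc struct_one struct_mult struct_lift)

lemma W_matpow: "matpow (lift A1 A2) i *v W v = W (bipow A1 A2 i v)"
proof (induction i)
  case 0
  show ?case using struct_W[OF struct_one, of v] by (simp add: matpow_0 bimat_one bipow_def)
next
  case (Suc i)
  have "matpow (lift A1 A2) (Suc i) *v W v = lift A1 A2 *v (matpow (lift A1 A2) i *v W v)"
    by (simp add: matpow_Suc matrix_vector_mul_assoc)
  also have "\<dots> = W (bimat A1 A2 (bipow A1 A2 i v))"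
    using struct_W[OF struct_lift, of A1 A2] by (simp add: Suc blk_lift)
  finally show ?case by (simp add: bipow_def)
qed

lemma blk_matpow: "bimat (blk1 (matpow (lift A1 A2) i)) (blk2 (matpow (lift A1 A2) i)) w = bipow A1 A2 i w"
  by (rule W_inj) (simp add: struct_W[OF struct_matpow, symmetric] W_matpow)

lemma PhiD_eq: "bimat (PhiD1 A1 A2 t) (PhiD2 A1 A2 t) w = bipow A1 A2 t w"
  by (simp add: PhiD1_def PhiD2_def blk_matpow)

lemma matpow_entry:
  fixes L :: "complex^'k^'k"
  assumes a: "\<And>r c. norm (L $ r $ c) \<le> a"
  shows "norm (matpow L i $ r $ c) \<le> (real CARD('k) * a) ^ i"
proof (induction i arbitrary: r c)
  case 0
  show ?case by (simp add: matpow_0 mat_def)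
next
  case (Suc i)
  have "norm (matpow L (Suc i) $ r $ c) = norm (\<Sum>k\<in>UNIV. L $ r $ k * matpow L i $ k $ c)"
    by (simp add: matpow_Suc matrix_matrix_mult_def)
  also have "\<dots> \<le> (\<Sum>k\<in>(UNIV::'k set). a * (real CARD('k) * a) ^ i)"
    by (rule sum_norm_le) (auto simp: norm_mult intro!: mult_mono a Suc.IH order_trans[OF norm_ge_zero a])
  also have "\<dots> = (real CARD('k) * a) ^ Suc i" by simp
  finally show ?case .
qed

lemma norm_vec_le_sum: "norm (x :: 'a::real_normed_vector^'k) \<le> (\<Sum>i\<in>UNIV. norm (x $ i))"
  unfolding norm_vec_def by (rule L2_set_le_sum) auto

lemma matexp_summable:
  fixes L :: "complex^'k^'k"
  shows "summable (\<lambda>i. (t ^ i / fact i) *\<^sub>R matpow L i)"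
proof -
  define a where "a = (\<Sum>r\<in>UNIV. \<Sum>c\<in>UNIV. norm (L $ r $ c))"
  have a: "norm (L $ r $ c) \<le> a" for r c
  proof -
    have "norm (L $ r $ c) \<le> (\<Sum>c\<in>UNIV. norm (L $ r $ c))"
      by (rule member_le_sum) auto
    also have "\<dots> \<le> a" unfolding a_def
      by (rule member_le_sum[of r UNIV "\<lambda>r. \<Sum>c\<in>UNIV. norm (L $ r $ c)"]) (auto intro: sum_nonneg)
    finally show ?thesis .
  qed
  define N where "N = real CARD('k)"
  have nm: "norm (matpow L i) \<le> N * (N * (N * a) ^ i)" for i
  proof -
    have "norm (matpow L i) \<le> (\<Sum>r\<in>UNIV. norm (matpow L i $ r))" by (rule norm_vec_le_sum)
    also have "\<dots> \<le> (\<Sum>r\<in>(UNIV::'k set). N * (N * a) ^ i)"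
    proof (rule sum_mono)
      fix r
      have "norm (matpow L i $ r) \<le> (\<Sum>c\<in>UNIV. norm (matpow L i $ r $ c))" by (rule norm_vec_le_sum)
      also have "\<dots> \<le> (\<Sum>c\<in>(UNIV::'k set). (N * a) ^ i)"
        by (rule sum_mono) (unfold N_def, rule matpow_entry[OF a])
      finally show "norm (matpow L i $ r) \<le> N * (N * a) ^ i" by (simp add: N_def)
    qed
    also have "\<dots> = N * (N * (N * a) ^ i)" by (simp add: N_def)
    finally show ?thesis .
  qed
  show ?thesis
  proof (rule summable_norm_cancel, rule summable_comparison_test)
    show "\<exists>M. \<forall>n\<ge>M. norm (norm ((t ^ n / fact n) *\<^sub>R matpow L n)) \<le> N * N * ((\<bar>t\<bar> * (N * a)) ^ n / fact n)"
    proof (intro exI allI impI)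
      fix n :: nat
      have "norm (norm ((t ^ n / fact n) *\<^sub>R matpow L n)) = (\<bar>t\<bar> ^ n / fact n) * norm (matpow L n)"
        by (simp add: power_abs)
      also have "\<dots> \<le> (\<bar>t\<bar> ^ n / fact n) * (N * (N * (N * a) ^ n))"
        by (intro mult_left_mono nm) auto
      also have "\<dots> = N * N * ((\<bar>t\<bar> * (N * a)) ^ n / fact n)" by (simp add: power_mult_distrib)
      finally show "norm (norm ((t ^ n / fact n) *\<^sub>R matpow L n)) \<le> N * N * ((\<bar>t\<bar> * (N * a)) ^ n / fact n)" .
    qed
    show "summable (\<lambda>n. N * N * ((\<bar>t\<bar> * (N * a)) ^ n / fact n))"
      using summable_exp[of "\<bar>t\<bar> * (N * a)"] by (intro summable_mult) (simp add: field_simps)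
  qed
qed

lemma blk_bl: "bounded_linear (\<lambda>M :: complex^('n::finite + 'n)^('n + 'n). bimat (blk1 M) (blk2 M) w)"
proof -
  have b1: "blk1 (M + N) = blk1 M + blk1 N" "blk2 (M + N) = blk2 M + blk2 N"
    "blk1 (c *\<^sub>R M) = c *\<^sub>R blk1 M" "blk2 (c *\<^sub>R M) = c *\<^sub>R blk2 M"
    for M N :: "complex^('n + 'n)^('n + 'n)" and c
    by (simp_all add: blk1_def blk2_def vec_eq_iff)
  show ?thesis
    by (simp add: linear_conv_bounded_linear[symmetric] linearI b1 bimat_add_mat bimat_scaleR_mat)
qed

lemma PhiC_eq: "bimat (PhiC1 A1 A2 t) (PhiC2 A1 A2 t) w = biexp t A1 A2 w"
proof -
  have "bimat (PhiC1 A1 A2 t) (PhiC2 A1 A2 t) w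
      = (\<Sum>i. bimat (blk1 ((t ^ i / fact i) *\<^sub>R matpow (lift A1 A2) i)) (blk2 ((t ^ i / fact i) *\<^sub>R matpow (lift A1 A2) i)) w)"
    unfolding PhiC1_def PhiC2_def matexp_def
    by (rule bounded_linear.suminf[OF blk_bl matexp_summable])
  also have "\<dots> = (\<Sum>i. (t ^ i / fact i) *\<^sub>R bipow A1 A2 i w)"
    by (simp only: linear_simps(5)[OF blk_bl] blk_matpow)
  finally show ?thesis by (simp add: biexp_def)
qed



lemma biexp_expo: "biexp t A1 A2 w = expo (bimat A1 A2) t w"
  by (simp add: biexp_def bipow_def expo_def)

lemma bipow_Suc: "bipow A1 A2 (Suc n) w = bimat A1 A2 (bipow A1 A2 n w)"
  by (simp add: bipow_def)

lemma disc_main: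
  fixes A1 A2 :: "complex ^ 'n ^ 'n" and B1 B2 :: "complex ^ 'm ^ 'n" and x0 :: "complex ^ 'n"
    and u :: "nat \<Rightarrow> complex ^ 'm"
  defines "Y \<equiv> \<lambda>t. bipow A1 A2 t x0 + (\<Sum>i<t. bipow A1 A2 (t - 1 - i) (bimat B1 B2 (u i)))"
  shows "dsol A1 A2 B1 B2 x0 u x \<longleftrightarrow> (\<forall>t. x t = Y t)" and "dsol A1 A2 B1 B2 x0 u Y"
proof -
  have Y0: "Y 0 = x0" by (simp add: Y_def bipow_def)
  have YS: "Y (Suc t) = bimat A1 A2 (Y t) + bimat B1 B2 (u t)" for t
  proof -
    have "bimat A1 A2 (Y t) = bipow A1 A2 (Suc t) x0 + (\<Sum>i<t. bimat A1 A2 (bipow A1 A2 (t - 1 - i) (bimat B1 B2 (u i))))"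
      by (simp add: Y_def bimat_add bipow_Suc linear_sum[OF bounded_linear.linear[OF bimat_bl]])
    also have "(\<Sum>i<t. bimat A1 A2 (bipow A1 A2 (t - 1 - i) (bimat B1 B2 (u i))))
        = (\<Sum>i<t. bipow A1 A2 (Suc t - 1 - i) (bimat B1 B2 (u i)))"
    proof (rule sum.cong)
      fix i assume "i \<in> {..<t}"
      then have "Suc t - 1 - i = Suc (t - 1 - i)" by auto
      then show "bimat A1 A2 (bipow A1 A2 (t - 1 - i) (bimat B1 B2 (u i))) = bipow A1 A2 (Suc t - 1 - i) (bimat B1 B2 (u i))"
        by (simp only: bipow_Suc)
    qed simp
    finally show ?thesis
      by (simp add: Y_def bipow_def)
  qed
  show "dsol A1 A2 B1 B2 x0 u Y" by (simp add: dsol_def Y0 YS)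
  show "dsol A1 A2 B1 B2 x0 u x \<longleftrightarrow> (\<forall>t. x t = Y t)"
  proof
    assume d: "dsol A1 A2 B1 B2 x0 u x"
    show "\<forall>t. x t = Y t"
    proof
      fix t show "x t = Y t"
        by (induction t) (use d in \<open>simp_all add: dsol_def Y0 YS\<close>)
    qed
  next
    assume "\<forall>t. x t = Y t"
    then show "dsol A1 A2 B1 B2 x0 u x" by (simp add: dsol_def Y0 YS)
  qed
qed

theorem theorem1:
  fixes A1 A2 :: "complex ^ 'n ^ 'n" and B1 B2 :: "complex ^ 'm ^ 'n"
    and x0 :: "complex ^ 'n"
  shows
   "(\<forall>u :: real \<Rightarrow> complex ^ 'm. (\<forall>t\<ge>0. u absolutely_integrable_on {0..t}) \<longrightarrow>
      (\<exists>x. csol A1 A2 B1 B2 x0 u x) \<and>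
      (\<forall>x. csol A1 A2 B1 B2 x0 u x \<longleftrightarrow>
         (\<forall>t\<ge>0. ((\<lambda>s. biexp (t - s) A1 A2 (bimat B1 B2 (u s)))
                     has_integral (x t - biexp t A1 A2 x0)) {0..t})) \<and>
      (\<forall>x. csol A1 A2 B1 B2 x0 u x \<longleftrightarrow>
         (\<forall>t\<ge>0. ((\<lambda>s. bimat (PhiC1 A1 A2 (t - s)) (PhiC2 A1 A2 (t - s)) (bimat B1 B2 (u s)))
                     has_integral (x t - bimat (PhiC1 A1 A2 t) (PhiC2 A1 A2 t) x0)) {0..t})))
    \<and>
    (\<forall>u :: nat \<Rightarrow> complex ^ 'm.
      (\<exists>x. dsol A1 A2 B1 B2 x0 u x) \<and>
      (\<forall>x. dsol A1 A2 B1 B2 x0 u x \<longleftrightarrow>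
         x 0 = x0 \<and>
         (\<forall>t\<ge>1. x t = bipow A1 A2 t x0 +
             (\<Sum>i<t. bipow A1 A2 (t - 1 - i) (bimat B1 B2 (u i))))) \<and>
      (\<forall>x. dsol A1 A2 B1 B2 x0 u x \<longleftrightarrow>
         x 0 = x0 \<and>
         (\<forall>t\<ge>1. x t = bimat (PhiD1 A1 A2 t) (PhiD2 A1 A2 t) x0 +
             (\<Sum>i<t. bimat (PhiD1 A1 A2 (t - 1 - i)) (PhiD2 A1 A2 (t - 1 - i)) (bimat B1 B2 (u i))))))"
proof (intro conjI allI impI)
  fix u :: "real \<Rightarrow> complex ^ 'm"
  assume ui: "\<forall>t\<ge>0. u absolutely_integrable_on {0..t}"
  have gabs: "(\<lambda>s. bimat B1 B2 (u s)) absolutely_integrable_on {0..t}" if "t \<ge> 0" for t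
    using absolutely_integrable_linear[OF ui[rule_format, OF that] bimat_bl[of B1 B2]] by (simp add: o_def)
  note cm = cont_main[OF bimat_bl[of A1 A2] gabs, of x0]
  show "\<exists>x. csol A1 A2 B1 B2 x0 u x" using cm unfolding csol_def by blast
  fix x
  show "csol A1 A2 B1 B2 x0 u x \<longleftrightarrow>
         (\<forall>t\<ge>0. ((\<lambda>s. biexp (t - s) A1 A2 (bimat B1 B2 (u s)))
                     has_integral (x t - biexp t A1 A2 x0)) {0..t})"
    using cm unfolding csol_def biexp_expo by blast
  show "csol A1 A2 B1 B2 x0 u x \<longleftrightarrow>
         (\<forall>t\<ge>0. ((\<lambda>s. bimat (PhiC1 A1 A2 (t - s)) (PhiC2 A1 A2 (t - s)) (bimat B1 B2 (u s)))
                     has_integral (x t - bimat (PhiC1 A1 A2 t) (PhiC2 A1 A2 t) x0)) {0..t})"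
    using cm unfolding csol_def PhiC_eq biexp_expo by blast
next
  fix u :: "nat \<Rightarrow> complex ^ 'm"
  define Y where "Y = (\<lambda>t. bipow A1 A2 t x0 + (\<Sum>i<t. bipow A1 A2 (t - 1 - i) (bimat B1 B2 (u i))))"
  note dm = disc_main[of A1 A2 B1 B2 x0 u, folded Y_def]
  have Y0: "Y 0 = x0" by (simp add: Y_def bipow_def)
  have eqv: "(\<forall>t. x t = Y t) \<longleftrightarrow> x 0 = x0 \<and> (\<forall>t\<ge>1. x t = Y t)" for x
    by (metis Y0 less_one not_le)
  show "\<exists>x. dsol A1 A2 B1 B2 x0 u x" using dm(2) by blast
  fix x
  show "dsol A1 A2 B1 B2 x0 u x \<longleftrightarrow>
         x 0 = x0 \<and>
         (\<forall>t\<ge>1. x t = bipow A1 A2 t x0 +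
             (\<Sum>i<t. bipow A1 A2 (t - 1 - i) (bimat B1 B2 (u i))))"
    using dm(1)[of x] eqv[of x] by (simp add: Y_def)
  show "dsol A1 A2 B1 B2 x0 u x \<longleftrightarrow>
         x 0 = x0 \<and>
         (\<forall>t\<ge>1. x t = bimat (PhiD1 A1 A2 t) (PhiD2 A1 A2 t) x0 +
             (\<Sum>i<t. bimat (PhiD1 A1 A2 (t - 1 - i)) (PhiD2 A1 A2 (t - 1 - i)) (bimat B1 B2 (u i))))"
    using dm(1)[of x] eqv[of x] by (simp add: Y_def PhiD_eq)
qed

end
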